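(* Let $b\ge1$, $0\le r\le b$ and $k$ be integers with $k\ge\frac{15}{2}\ln b+16$. Let $\Omega'$ be a probability distribution on the set of functions $[r]\to[b]$ such that for every $I\subseteq[r]$ with $|I|\le k$ and every $x:I\to[b]$, $\Pr_{\omega\sim\Omega'}\big(\bigwedge_{i\in I}\omega(i)=x(i)\big)=b^{-|I|}$. Let $X'(\omega):=|\omega([r])|$ and $\rho(r):=b(1-(1-b^{-1})^r)$. Then \[ \Pr_{\omega\sim\Omega'}\big(|X'(\omega)-\rho(r)|>9\,b^{-1/2}r\big)\le 2^{-6}. \]
   Context: $[N]:=\{0,\dots,N-1\}$; $\omega([r])$ is the image of $\omega$. *)

theory Defs
  imports "HOL-Probability.Probability"
begin

definition rho :: "nat \<Rightarrow> nat \<Rightarrow> real" where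
  "rho b r = real b * (1 - (1 - 1 / real b) ^ r)"

end

theory Submission
  imports Defs
begin
lemma bonf:
  fixes x :: real assumes x0: "0 \<le> x" and x1: "x \<le> 1"
  shows "0 \<le> (-1)^m * ((1-x)^r - (\<Sum>s<m. (-1)^s * real (r choose s) * x^s)) \<and>
         (-1)^m * ((1-x)^r - (\<Sum>s<m. (-1)^s * real (r choose s) * x^s)) \<le> real (r choose m) * x^m"
proof (induction r arbitrary: m)
  case 0
  then show ?case by (cases m) (simp_all add: sum.lessThan_Suc_shift del: sum.lessThan_Suc)
next
  case (Suc r)
  show ?case
  proof (cases m)
    case 0
    then show ?thesis using x0 x1 power_le_one[of "1-x" "Suc r"] by simp
  next
    case (Suc m')
    define F where "F m = (1-x)^r - (\<Sum>s<m. (-1)^s * real (r choose s) * x^s)" for m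
    have rec: "(\<Sum>s<Suc m'. (-1)^s * real (Suc r choose s) * x^s) =
       (\<Sum>s<Suc m'. (-1)^s * real (r choose s) * x^s) - x * (\<Sum>s<m'. (-1)^s * real (r choose s) * x^s)"
      by (simp add: sum.lessThan_Suc_shift algebra_simps sum.distrib sum_distrib_left sum_negf sum_subtractf del: sum.lessThan_Suc)
    have e: "(1-x)^Suc r - (\<Sum>s<Suc m'. (-1)^s * real (Suc r choose s) * x^s) = F (Suc m') - x * F m'"
      unfolding rec F_def by (simp add: algebra_simps)
    have e2: "(-1)^Suc m' * ((1-x)^Suc r - (\<Sum>s<Suc m'. (-1)^s * real (Suc r choose s) * x^s))
        = (-1)^Suc m' * F (Suc m') + x * ((-1)^m' * F m')"
      unfolding e by (simp add: algebra_simps)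
    have i1: "0 \<le> (-1)^Suc m' * F (Suc m') \<and> (-1)^Suc m' * F (Suc m') \<le> real (r choose Suc m') * x^Suc m'"
      using Suc.IH[of "Suc m'"] unfolding F_def by simp
    have i2: "0 \<le> (-1)^m' * F m' \<and> (-1)^m' * F m' \<le> real (r choose m') * x^m'"
      using Suc.IH[of "m'"] unfolding F_def by simp
    have i3: "0 \<le> x * ((-1)^m' * F m') \<and> x * ((-1)^m' * F m') \<le> x * (real (r choose m') * x^m')"
      using i2 x0 by (simp add: mult_left_mono)
    show ?thesis unfolding \<open>m = Suc m'\<close> e2 using i1 i3
      by (simp add: algebra_simps)
  qed
qed


lemma prob_sum:
  assumes "finite (set_pmf M)"
  shows "measure_pmf.prob M A = (\<Sum>\<omega>\<in>set_pmf M. pmf M \<omega> * of_bool (\<omega> \<in> A))"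
proof -
  have "measure_pmf.prob M A = measure_pmf.prob M (A \<inter> set_pmf M)"
    by (simp add: measure_Int_set_pmf)
  also have "\<dots> = sum (pmf M) (A \<inter> set_pmf M)"
    using assms by (simp add: measure_measure_pmf_finite)
  also have "\<dots> = (\<Sum>\<omega>\<in>set_pmf M. pmf M \<omega> * of_bool (\<omega> \<in> A))"
    using assms by (simp add: sum.inter_filter Int_commute Collect_conj_eq[symmetric] of_bool_def if_distrib sum.If_cases)
  finally show ?thesis .
qed

lemma pick_sum:
  assumes "finite S" "finite T"
  shows "(\<Sum>x\<in>S \<rightarrow>\<^sub>E T. of_bool (\<forall>i\<in>S. \<omega> i = x i) :: real) = of_bool (\<forall>i\<in>S. \<omega> i \<in> T)"
proof (cases "\<forall>i\<in>S. \<omega> i \<in> T")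
  case True
  have "(S \<rightarrow>\<^sub>E T) \<inter> {x. \<forall>i\<in>S. \<omega> i = x i} = {restrict \<omega> S}"
    using True by (auto simp: PiE_iff extensional_def restrict_def)
  then show ?thesis using assms True by (simp add: finite_PiE)
next
  case False
  have "(S \<rightarrow>\<^sub>E T) \<inter> {x. \<forall>i\<in>S. \<omega> i = x i} = {}"
    using False by (auto simp: PiE_iff)
  then show ?thesis using assms False by (simp add: finite_PiE)
qed

lemma moment:
  fixes M :: "(nat \<Rightarrow> nat) pmf" and T :: "nat set"
  assumes fin: "finite (set_pmf M)" and T: "T \<subseteq> {..<b}" and sm: "s \<le> m"
   and hyp: "\<And>I x. I \<subseteq> {..<r} \<Longrightarrow> card I \<le> m \<Longrightarrow> x \<in> I \<rightarrow>\<^sub>E {..<b} \<Longrightarrow>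
       measure_pmf.prob M {\<omega>. \<forall>i\<in>I. \<omega> i = x i} = (1/real b)^card I"
  shows "(\<Sum>\<omega>\<in>set_pmf M. pmf M \<omega> * real (card {i. i<r \<and> \<omega> i \<in> T} choose s)) 
          = real (r choose s) * (real (card T)/real b)^s"
proof -
  define Sub where "Sub = {S. S \<subseteq> {..<r} \<and> card S = s}"
  have finSub: "finite Sub" unfolding Sub_def by simp
  have cSub: "card Sub = r choose s" unfolding Sub_def using n_subsets[of "{..<r}" s] by simp
  have h1: "real (card {i. i<r \<and> \<omega> i \<in> T} choose s) = (\<Sum>S\<in>Sub. of_bool(\<forall>i\<in>S. \<omega> i \<in> T))" for \<omega>
  proof -
    have "card {i. i<r \<and> \<omega> i \<in> T} choose s = card {B. B \<subseteq> {i. i<r \<and> \<omega> i \<in> T} \<and> card B = s}"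
      by (rule n_subsets[symmetric]) simp
    also have "{B. B \<subseteq> {i. i<r \<and> \<omega> i \<in> T} \<and> card B = s} = Sub \<inter> {S. \<forall>i\<in>S. \<omega> i \<in> T}"
      unfolding Sub_def by auto
    finally show ?thesis using finSub by simp
  qed
  have h2: "(\<Sum>\<omega>\<in>set_pmf M. pmf M \<omega> * of_bool(\<forall>i\<in>S. \<omega> i \<in> T)) = (real (card T)/real b)^s"
    if "S \<in> Sub" for S
  proof -
    have S: "S \<subseteq> {..<r}" "card S = s" "finite S" using that unfolding Sub_def by (auto intro: finite_subset)
    have "(\<Sum>\<omega>\<in>set_pmf M. pmf M \<omega> * of_bool(\<forall>i\<in>S. \<omega> i \<in> T))
       = (\<Sum>\<omega>\<in>set_pmf M. pmf M \<omega> * (\<Sum>x\<in>S \<rightarrow>\<^sub>E T. of_bool (\<forall>i\<in>S. \<omega> i = x i)))"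
      using pick_sum[OF S(3) finite_subset[OF T]] by simp
    also have "\<dots> = (\<Sum>x\<in>S \<rightarrow>\<^sub>E T. (\<Sum>\<omega>\<in>set_pmf M. pmf M \<omega> * of_bool (\<forall>i\<in>S. \<omega> i = x i)))"
      by (simp add: sum_distrib_left sum.swap[of _ "set_pmf M"])
    also have "\<dots> = (\<Sum>x\<in>S \<rightarrow>\<^sub>E T. (1/real b)^s)"
    proof (rule sum.cong[OF refl])
      fix x assume x: "x \<in> S \<rightarrow>\<^sub>E T"
      have "x \<in> S \<rightarrow>\<^sub>E {..<b}" using x T by (auto simp: PiE_iff)
      then have "measure_pmf.prob M {\<omega>. \<forall>i\<in>S. \<omega> i = x i} = (1/real b)^s"
        using hyp[of S x] S sm by simp
      then show "(\<Sum>\<omega>\<in>set_pmf M. pmf M \<omega> * of_bool (\<forall>i\<in>S. \<omega> i = x i)) = (1/real b)^s"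
        using prob_sum[OF fin] by simp
    qed
    also have "\<dots> = real (card T)^s * (1/real b)^s"
      using S by (simp add: card_PiE)
    finally show ?thesis by (simp add: power_divide)
  qed
  have "(\<Sum>\<omega>\<in>set_pmf M. pmf M \<omega> * real (card {i. i<r \<and> \<omega> i \<in> T} choose s))
      = (\<Sum>S\<in>Sub. (\<Sum>\<omega>\<in>set_pmf M. pmf M \<omega> * of_bool(\<forall>i\<in>S. \<omega> i \<in> T)))"
    unfolding h1 by (simp add: sum_distrib_left sum.swap[of _ "set_pmf M"])
  also have "\<dots> = (\<Sum>S\<in>Sub. (real (card T)/real b)^s)"
    using h2 by simp
  finally show ?thesis using cSub by simp
qed


lemma abs_from_bonf:
  assumes "0 \<le> (-1::real)^m * D \<and> (-1)^m * D \<le> c"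
  shows "\<bar>D\<bar> \<le> c"
proof -
  have "\<bar>D\<bar> = \<bar>(-1::real)^m * D\<bar>" by (simp add: abs_mult)
  then show ?thesis using assms by simp
qed

lemma L1:
  fixes M :: "(nat \<Rightarrow> nat) pmf" and T :: "nat set"
  assumes fin: "finite (set_pmf M)" and T: "T \<subseteq> {..<b}" and b: "b \<ge> 1"
   and hyp: "\<And>I x. I \<subseteq> {..<r} \<Longrightarrow> card I \<le> m \<Longrightarrow> x \<in> I \<rightarrow>\<^sub>E {..<b} \<Longrightarrow>
       measure_pmf.prob M {\<omega>. \<forall>i\<in>I. \<omega> i = x i} = (1/real b)^card I"
  shows "\<bar>(\<Sum>\<omega>\<in>set_pmf M. pmf M \<omega> * of_bool (\<forall>i<r. \<omega> i \<notin> T)) - (1 - real (card T)/real b)^r\<bar>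
          \<le> 2 * real (r choose m) * (real (card T)/real b)^m"
proof -
  define t where "t = real (card T)/real b"
  have cT: "card T \<le> b" using card_mono[OF _ T] by simp
  have t0: "0 \<le> t" and t1: "t \<le> 1" unfolding t_def using cT b by (auto simp: field_simps)
  define Sm where "Sm = (\<Sum>s<m. (-1)^s * real (r choose s) * t^s)"
  define A where "A \<omega> = card {i. i<r \<and> \<omega> i \<in> T}" for \<omega> :: "nat \<Rightarrow> nat"
  define D where "D \<omega> = (1-1::real)^(A \<omega>) - (\<Sum>s<m. (-1)^s * real (A \<omega> choose s) * 1^s)" for \<omega>
  have pw: "of_bool (\<forall>i<r. \<omega> i \<notin> T) = (1-1::real)^(A \<omega>)" for \<omega>
  proof -
    have "A \<omega> = 0 \<longleftrightarrow> (\<forall>i<r. \<omega> i \<notin> T)" unfolding A_def by auto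
    then show ?thesis by (cases "A \<omega> = 0") auto
  qed
  have Dabs: "\<bar>D \<omega>\<bar> \<le> real (A \<omega> choose m)" for \<omega>
    using abs_from_bonf[OF bonf[of 1 m "A \<omega>"]] unfolding D_def by simp
  have mom: "(\<Sum>\<omega>\<in>set_pmf M. pmf M \<omega> * real (A \<omega> choose s)) = real (r choose s) * t^s" if "s \<le> m" for s
    unfolding A_def t_def by (rule moment[OF fin T that hyp]) auto
  have "(\<Sum>\<omega>\<in>set_pmf M. pmf M \<omega> * (\<Sum>s<m. (-1)^s * real (A \<omega> choose s) * 1^s))
      = (\<Sum>s<m. (-1)^s * (\<Sum>\<omega>\<in>set_pmf M. pmf M \<omega> * real (A \<omega> choose s)))"
    by (simp add: sum_distrib_left sum.swap[of _ "set_pmf M"] algebra_simps)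
  also have "\<dots> = Sm" unfolding Sm_def using mom by (simp add: algebra_simps)
  finally have eSm: "(\<Sum>\<omega>\<in>set_pmf M. pmf M \<omega> * (\<Sum>s<m. (-1)^s * real (A \<omega> choose s) * 1^s)) = Sm" .
  have "(\<Sum>\<omega>\<in>set_pmf M. pmf M \<omega> * of_bool (\<forall>i<r. \<omega> i \<notin> T)) - Sm
      = (\<Sum>\<omega>\<in>set_pmf M. pmf M \<omega> * D \<omega>)"
    unfolding pw D_def eSm[symmetric] by (simp add: sum_subtractf algebra_simps)
  also have "\<bar>\<dots>\<bar> \<le> (\<Sum>\<omega>\<in>set_pmf M. \<bar>pmf M \<omega> * D \<omega>\<bar>)" by (rule sum_abs)
  also have "\<dots> \<le> (\<Sum>\<omega>\<in>set_pmf M. pmf M \<omega> * real (A \<omega> choose m))"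
    by (rule sum_mono) (simp add: abs_mult mult_left_mono Dabs)
  also have "\<dots> = real (r choose m) * t^m" using mom by simp
  finally have a1: "\<bar>(\<Sum>\<omega>\<in>set_pmf M. pmf M \<omega> * of_bool (\<forall>i<r. \<omega> i \<notin> T)) - Sm\<bar> \<le> real (r choose m) * t^m" .
  have a2: "\<bar>(1-t)^r - Sm\<bar> \<le> real (r choose m) * t^m"
    using abs_from_bonf[OF bonf[OF t0 t1, of m r]] unfolding Sm_def by simp
  show ?thesis using a1 a2 unfolding t_def[symmetric] by linarith
qed


lemma pow_diff_le:
  fixes a c :: real assumes "0 \<le> c" "c \<le> a"
  shows "a^n - c^n \<le> real n * a^(n-1) * (a-c)"
proof (induction n)
  case 0 then show ?case by simp
next
  case (Suc n)
  have "a^Suc n - c^Suc n = a*(a^n - c^n) + c^n*(a-c)" by (simp add: algebra_simps)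
  also have "\<dots> \<le> a*(real n * a^(n-1) * (a-c)) + a^n*(a-c)"
    using Suc assms by (intro add_mono mult_left_mono mult_right_mono power_mono) auto
  also have "\<dots> = real (Suc n) * a^n * (a-c)"
    by (cases n) (simp_all add: algebra_simps)
  finally show ?case by simp
qed

lemma pow_diff_ge:
  fixes a c :: real assumes "0 \<le> c" "c \<le> a"
  shows "real n * c^(n-1) * (a-c) \<le> a^n - c^n"
proof (induction n)
  case 0 then show ?case by simp
next
  case (Suc n)
  have "real (Suc n) * c^n * (a-c) = c*(real n * c^(n-1) * (a-c)) + c^n*(a-c)"
    by (cases n) (simp_all add: algebra_simps)
  also have "\<dots> \<le> a*(a^n - c^n) + c^n*(a-c)"
    using Suc assms by (intro add_mono mult_mono) auto
  also have "\<dots> = a^Suc n - c^Suc n" by (simp add: algebra_simps)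
  finally show ?case by simp
qed

lemma Vu:
  assumes b: "b \<ge> (1::nat)"
  shows "real b * (1-1/real b)^r + real b * (real b - 1) * (1-2/real b)^r - (real b)^2 * ((1-1/real b)^r)^2
         \<le> (real r)^2 / real b"
proof (cases "b = 1")
  case True
  then show ?thesis by (cases r) simp_all
next
  case False
  then have b2: "real b \<ge> 2" using b by simp
  show ?thesis
  proof (cases r)
    case 0 then show ?thesis by (simp add: algebra_simps power2_eq_square)
  next
    case (Suc r')
    define u where "u = 1 - 1/real b"
    define v where "v = 1 - 2/real b"
    have v0: "0 \<le> v" and vu: "v \<le> u" and u1: "u \<le> 1" and u0: "0 \<le> u"
      unfolding u_def v_def using b2 by (auto simp: field_simps)
    have uu: "u^2 = v + 1/(real b)^2" unfolding u_def v_def using b2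
      by (simp add: field_simps power2_eq_square)
    have V: "real b * u^r + real b * (real b - 1) * v^r - (real b)^2 * (u^r)^2
          = real b * (u^r - v^r) - (real b)^2 * ((u^2)^r - v^r)"
    proof -
      have "(u^r)^2 = (u^2)^r" by (simp add: power_mult[symmetric] mult.commute)
      then show ?thesis by (simp add: algebra_simps power2_eq_square)
    qed
    have e1: "u^r - v^r \<le> real r * u^(r-1) / real b"
      using pow_diff_le[OF v0 vu, of r] unfolding u_def v_def using b2 by (simp add: field_simps)
    have e2: "real r * v^(r-1) / (real b)^2 \<le> (u^2)^r - v^r"
      using pow_diff_ge[of v "u^2" r] v0 uu by (simp add: field_simps)
    have "real b * (u^r - v^r) - (real b)^2 * ((u^2)^r - v^r)
        \<le> real b * (real r * u^(r-1) / real b) - (real b)^2 * (real r * v^(r-1) / (real b)^2)"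
      using e1 e2 b2 by (intro diff_mono mult_left_mono) auto
    also have "\<dots> = real r * (u^(r-1) - v^(r-1))" using b2 by (simp add: field_simps)
    also have "\<dots> \<le> real r * (real (r-1) * u^(r-1-1) * (u - v))"
      using pow_diff_le[OF v0 vu, of "r-1"] by (intro mult_left_mono) auto
    also have "\<dots> \<le> real r * (real r * 1 * (1/real b))"
      using u0 u1 b2 unfolding u_def v_def
      by (intro mult_left_mono mult_mono power_le_one) (auto simp: Suc)
    also have "\<dots> = (real r)^2 / real b" by (simp add: power2_eq_square)
    finally have "real b * u^r + real b * (real b - 1) * v^r - (real b)^2 * (u^r)^2 \<le> (real r)^2 / real b"
      unfolding V .
    then show ?thesis unfolding u_def v_def .
  qed
qed

lemma fact_big: "m \<ge> 16 \<Longrightarrow> 512 * 4^m \<le> (fact m :: nat)"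
proof (induction m rule: nat_induct_at_least)
  case base then show ?case by (simp add: fact_numeral)
next
  case (Suc n)
  have "(512::nat) * 4^Suc n = 4 * (512 * 4^n)" by simp
  also have "\<dots> \<le> Suc n * fact n" using Suc by (intro mult_mono) auto
  finally show ?case by simp
qed


lemma aux1: "(x::real) \<noteq> 0 \<Longrightarrow> 8 * x * (y * z / (f * x)) = 8 * y * z / f"
  by (simp add: field_simps)
lemma aux2:
  fixes f bb t R :: real
  assumes "0 < f" "0 < bb" "8*t*bb*64 \<le> 17*f" "0 \<le> R"
  shows "8*R*t/f \<le> 17/64*R/bb"
proof -
  have "8*R*t/f = R * (8*t/f)" by simp
  also have "8*t/f \<le> 17/(64*bb)" using assms by (simp add: field_simps)
  then have "R * (8*t/f) \<le> R * (17/(64*bb))" using assms(4) by (rule mult_left_mono)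
  also have "R * (17/(64*bb)) = 17/64*R/bb" by simp
  finally show ?thesis .
qed
lemma err_bound:
  assumes m: "m \<ge> 16" and b: "b \<ge> 1" and b2: "real b \<le> 2^m" and rb: "r \<le> b"
  shows "8 * (real b)^2 * (real (r choose m) * (2/real b)^m) \<le> 17/64 * (real r)^2 / real b"
proof -
  have bp: "real b > 0" using b by simp
  have f1: "real (r choose m) * fact m \<le> real r ^ m"
    using binomial_fact_pow[of r m] by (metis of_nat_fact of_nat_le_iff of_nat_mult of_nat_power)
  have fpos: "(fact m :: real) > 0" by simp
  have mm: "m = 2 + (m-2)" using m by simp
  have rm: "real r ^ m \<le> (real r)^2 * real b ^ (m-2)"
  proof -
    have "real r ^ m = (real r)^2 * real r ^ (m-2)" by (metis mm power_add)
    also have "\<dots> \<le> (real r)^2 * real b ^ (m-2)" using rb by (intro mult_left_mono power_mono) auto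
    finally show ?thesis .
  qed
  have bm: "real b ^ m = (real b)^2 * real b ^ (m-2)" by (metis mm power_add)
  have "real (r choose m) * (2/real b)^m \<le> (real r)^2 * real b ^ (m-2) / fact m * (2/real b)^m"
    using f1 rm fpos by (intro mult_right_mono) (auto simp: field_simps)
  also have "\<dots> = (real r)^2 * 2^m / (fact m * (real b)^2)"
    using bp bm by (simp add: field_simps power_divide)
  finally have c1: "real (r choose m) * (2/real b)^m \<le> (real r)^2 * 2^m / (fact m * (real b)^2)" .
  have "8 * (real b)^2 * (real (r choose m) * (2/real b)^m) \<le> 8 * (real b)^2 * ((real r)^2 * 2^m / (fact m * (real b)^2))"
    using c1 by (intro mult_left_mono) auto
  also have "\<dots> = 8 * (real r)^2 * 2^m / fact m" using bp by (intro aux1) simp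
  also have "\<dots> \<le> 17/64 * (real r)^2 / real b"
  proof -
    have "real (512 * 4^m) \<le> real (fact m)" using fact_big[OF m] by (simp only: of_nat_le_iff)
    then have fb: "512 * 4^m \<le> (fact m :: real)" by simp
    have "512 * 2^m * real b \<le> 512 * 2^m * 2^m" using b2 by simp
    also have "\<dots> = 512 * (4::real)^m" by (simp add: power_mult_distrib[symmetric])
    finally have "512 * 2^m * real b \<le> 512 * (4::real)^m" .
    with fb fpos have "512 * 2^m * real b \<le> 17 * fact m" by linarith
    then have "8 * 2^m * real b * 64 \<le> 17 * fact m" by simp
    then show ?thesis using bp fpos by (intro aux2) auto
  qed
  finally show ?thesis .
qed


theorem lemma20:
  fixes b r :: nat and k :: int and \<Omega> :: "(nat \<Rightarrow> nat) pmf"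
  assumes "b \<ge> 1" and "r \<le> b"
    and "real_of_int k \<ge> 15 / 2 * ln (real b) + 16"
    and "set_pmf \<Omega> \<subseteq> {..<r} \<rightarrow>\<^sub>E {..<b}"
    and "\<And>I x. I \<subseteq> {..<r} \<Longrightarrow> int (card I) \<le> k \<Longrightarrow> x \<in> I \<rightarrow>\<^sub>E {..<b} \<Longrightarrow>
           measure_pmf.prob \<Omega> {\<omega>. \<forall>i\<in>I. \<omega> i = x i} = (1 / real b) ^ card I"
  shows "measure_pmf.prob \<Omega>
           {\<omega>. \<bar>real (card (\<omega> ` {..<r})) - rho b r\<bar> > 9 * real b powr (-1/2) * real r}
         \<le> 2 powr (-6)"
proof -
  note b = assms(1) and rb = assms(2) and kb = assms(3) and supp = assms(4) and hyp0 = assms(5)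
  define m where "m = nat k"
  have bp: "real b > 0" using b by simp
  have lnb: "ln (real b) \<ge> 0" using b by simp
  have k16: "real_of_int k \<ge> 16" using kb lnb by linarith
  have mk: "real m = real_of_int k" unfolding m_def using k16 by simp
  have m16: "m \<ge> 16" using mk k16 by linarith
  have ln2: "ln (2::real) \<ge> 1/2"
  proof -
    have "ln (1/2::real) \<le> 1/2 - 1" by (rule ln_le_minus_one) simp
    then show ?thesis by (simp add: ln_div)
  qed
  have b2m: "real b \<le> 2^m"
  proof -
    have "real m * (1/2) \<le> real m * ln 2" using ln2 by (intro mult_left_mono) auto
    then have "ln (real b) \<le> real m * ln 2" using kb mk lnb m16 by linarith
    also have "\<dots> = ln (2^m)" by (simp add: ln_realpow)
    finally show ?thesis using bp by simp
  qed
  have k0: "k \<ge> 0" using k16 by simp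
  have hyp: "measure_pmf.prob \<Omega> {\<omega>. \<forall>i\<in>I. \<omega> i = x i} = (1/real b)^card I"
    if "I \<subseteq> {..<r}" "card I \<le> m" "x \<in> I \<rightarrow>\<^sub>E {..<b}" for I x
  proof -
    have "int (card I) \<le> k" using that(2) le_nat_iff[OF k0, of "card I"] unfolding m_def by simp
    then show ?thesis using hyp0 that by blast
  qed
  have fin: "finite (set_pmf \<Omega>)" using supp by (rule finite_subset) (simp add: finite_PiE)
  show ?thesis
  proof (cases "r = 0")
    case True
    then have E: "{\<omega>. \<bar>real (card (\<omega> ` {..<r})) - rho b r\<bar> > 9 * real b powr (-1/2) * real r} = {}"
      by (simp add: rho_def)
    show ?thesis unfolding E by simp
  next
    case False
    then have r1: "r \<ge> 1" by simp
    define S where "S = set_pmf \<Omega>"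
    define p where "p = pmf \<Omega>"
    define P where "P T = (\<Sum>\<omega>\<in>S. p \<omega> * of_bool (\<forall>i<r. \<omega> i \<notin> T))" for T
    define q where "q = (1 - 1/real b)^r"
    define q2 where "q2 = (1 - 2/real b)^r"
    define \<nu> where "\<nu> = real b * q"
    define e2 where "e2 = 2 * real (r choose m) * (2/real b)^m"
    define \<delta> where "\<delta> = 9 * real b powr (-1/2) * real r"
    define Z where "Z j \<omega> = (of_bool (\<forall>i<r. \<omega> i \<notin> {j}) :: real)" for j and \<omega> :: "nat \<Rightarrow> nat"
    define N where "N \<omega> = (\<Sum>j<b. Z j \<omega>)" for \<omega>
    have sump: "(\<Sum>\<omega>\<in>S. p \<omega>) = 1" unfolding S_def p_def using fin by (simp add: sum_pmf_eq_1)
    have p0: "p \<omega> \<ge> 0" for \<omega> unfolding p_def by simp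
    have u01: "0 \<le> 1 - 1/real b" "1 - 1/real b \<le> 1" using b by (auto simp: field_simps)
    have q0: "0 \<le> q" "q \<le> 1" unfolding q_def using u01 by (simp_all add: power_le_one)
    have e2pos: "0 \<le> e2" unfolding e2_def by simp
    have P1: "\<bar>P {j} - q\<bar> \<le> e2" if "j < b" for j
    proof -
      have "\<bar>(\<Sum>\<omega>\<in>set_pmf \<Omega>. pmf \<Omega> \<omega> * of_bool (\<forall>i<r. \<omega> i \<notin> {j})) - (1 - real (card {j})/real b)^r\<bar>
          \<le> 2 * real (r choose m) * (real (card {j})/real b)^m"
        by (rule L1[OF fin _ b hyp]) (use that in auto)
      then have "\<bar>P {j} - q\<bar> \<le> 2 * real (r choose m) * (1/real b)^m"
        unfolding P_def q_def S_def p_def by simp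
      also have "\<dots> \<le> e2" unfolding e2_def using bp
        by (intro mult_left_mono power_mono) (auto simp: field_simps)
      finally show ?thesis .
    qed
    have P2: "\<bar>P {j,j'} - q2\<bar> \<le> e2" if "j < b" "j' < b" "j \<noteq> j'" for j j'
    proof -
      have "\<bar>(\<Sum>\<omega>\<in>set_pmf \<Omega>. pmf \<Omega> \<omega> * of_bool (\<forall>i<r. \<omega> i \<notin> {j,j'})) - (1 - real (card {j,j'})/real b)^r\<bar>
          \<le> 2 * real (r choose m) * (real (card {j,j'})/real b)^m"
        by (rule L1[OF fin _ b hyp]) (use that in auto)
      then show ?thesis
        using that unfolding P_def q2_def S_def p_def e2_def by simp
    qed
    have \<delta>2: "\<delta>^2 = 81 * (real r)^2 / real b"
    proof -
      have "(real b powr (-1/2))^2 = real b powr (-1)" using bp by (simp add: powr_power)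
      then show ?thesis unfolding \<delta>_def using bp by (simp add: power_mult_distrib powr_minus field_simps)
    qed
    have \<delta>pos: "\<delta> > 0" unfolding \<delta>_def using bp r1 by simp
    have card_eq: "real (card (\<omega> ` {..<r})) - rho b r = \<nu> - N \<omega>" if "\<omega> \<in> S" for \<omega>
    proof -
      have img: "\<omega> ` {..<r} \<subseteq> {..<b}" using that supp unfolding S_def by (auto simp: PiE_iff)
      have "{..<b} \<inter> {j. \<forall>i<r. \<omega> i \<notin> {j}} = {..<b} - \<omega> ` {..<r}" by auto
      then have "N \<omega> = real (card ({..<b} - \<omega> ` {..<r}))" unfolding N_def Z_def by simp
      also have "\<dots> = real b - real (card (\<omega> ` {..<r}))"
      proof -
        have "card (\<omega> ` {..<r}) \<le> b" using card_mono[OF _ img] by simp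
        then show ?thesis using img by (simp add: card_Diff_subset of_nat_diff)
      qed
      finally show ?thesis unfolding rho_def \<nu>_def q_def by (simp add: algebra_simps)
    qed

    have Zprod: "Z j \<omega> * Z j' \<omega> = of_bool (\<forall>i<r. \<omega> i \<notin> {j,j'})" for j j' \<omega>
      unfolding Z_def by auto
    have NN: "N \<omega> * N \<omega> = (\<Sum>j<b. \<Sum>j'<b. of_bool (\<forall>i<r. \<omega> i \<notin> {j,j'}))" for \<omega>
      unfolding N_def sum_product Zprod ..
    have sq: "(N \<omega> - \<nu>)^2 = (\<Sum>j<b. \<Sum>j'<b. of_bool (\<forall>i<r. \<omega> i \<notin> {j,j'})) - 2*\<nu>*(\<Sum>j<b. Z j \<omega>) + \<nu>^2" for \<omega>
    proof -
      have h: "(N \<omega> - \<nu>)^2 = N \<omega> * N \<omega> - 2*\<nu>*N \<omega> + \<nu>^2" by (simp add: power2_eq_square algebra_simps)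
      show ?thesis unfolding h NN by (simp add: N_def)
    qed
    have swap2: "(\<Sum>\<omega>\<in>S. p \<omega> * (\<Sum>j<b. \<Sum>j'<b. f j j' \<omega>)) = (\<Sum>j<b. \<Sum>j'<b. \<Sum>\<omega>\<in>S. p \<omega> * f j j' \<omega>)"
      for f :: "nat \<Rightarrow> nat \<Rightarrow> (nat \<Rightarrow> nat) \<Rightarrow> real"
    proof -
      have "(\<Sum>\<omega>\<in>S. p \<omega> * (\<Sum>j<b. \<Sum>j'<b. f j j' \<omega>)) = (\<Sum>\<omega>\<in>S. \<Sum>j<b. \<Sum>j'<b. p \<omega> * f j j' \<omega>)"
        by (simp only: sum_distrib_left)
      also have "\<dots> = (\<Sum>j<b. \<Sum>\<omega>\<in>S. \<Sum>j'<b. p \<omega> * f j j' \<omega>)" by (rule sum.swap)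
      also have "\<dots> = (\<Sum>j<b. \<Sum>j'<b. \<Sum>\<omega>\<in>S. p \<omega> * f j j' \<omega>)"
        by (rule sum.cong[OF refl], rule sum.swap)
      finally show ?thesis .
    qed
    have swap1: "(\<Sum>\<omega>\<in>S. p \<omega> * (\<Sum>j<b. Z j \<omega>)) = (\<Sum>j<b. P {j})"
      unfolding P_def Z_def by (simp only: sum_distrib_left) (rule sum.swap)
    have E2eq: "(\<Sum>\<omega>\<in>S. p \<omega> * (N \<omega> - \<nu>)^2) = (\<Sum>j<b. \<Sum>j'<b. P {j,j'}) - 2*\<nu>*(\<Sum>j<b. P {j}) + \<nu>^2"
    proof -
      have "(\<Sum>\<omega>\<in>S. p \<omega> * (N \<omega> - \<nu>)^2) = (\<Sum>\<omega>\<in>S. p \<omega> * (\<Sum>j<b. \<Sum>j'<b. of_bool (\<forall>i<r. \<omega> i \<notin> {j,j'})))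
          - 2*\<nu>*(\<Sum>\<omega>\<in>S. p \<omega> * (\<Sum>j<b. Z j \<omega>)) + \<nu>^2 * (\<Sum>\<omega>\<in>S. p \<omega>)"
        unfolding sq by (simp add: sum.distrib sum_subtractf sum_distrib_left right_diff_distrib distrib_left mult.assoc mult.left_commute) (simp add: mult.commute)
      also have "\<dots> = (\<Sum>j<b. \<Sum>j'<b. P {j,j'}) - 2*\<nu>*(\<Sum>j<b. P {j}) + \<nu>^2"
        unfolding swap2 swap1 sump P_def by simp
      finally show ?thesis .
    qed
    have rowsplit: "(\<Sum>j'<b. P {j,j'}) = P {j} + (\<Sum>j'\<in>{..<b}-{j}. P {j,j'})" if "j < b" for j
      using sum.remove[of "{..<b}" j "\<lambda>j'. P {j,j'}"] that by simp
    define Err where "Err = (\<Sum>j<b. (P {j} - q) * (1 - 2*\<nu>) + (\<Sum>j'\<in>{..<b}-{j}. P {j,j'} - q2))"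
    have cardrm: "card ({..<b}-{j}) = b - 1" if "j < b" for j using that by simp
    have E2Vu: "(\<Sum>\<omega>\<in>S. p \<omega> * (N \<omega> - \<nu>)^2) = real b * q * (1 - 2*\<nu>) + real b * (real b - 1) * q2 + \<nu>^2 + Err"
    proof -
      have "(\<Sum>j<b. \<Sum>j'<b. P {j,j'}) = (\<Sum>j<b. P {j} + (\<Sum>j'\<in>{..<b}-{j}. P {j,j'}))"
        using rowsplit by simp
      moreover have "(\<Sum>j<b. (\<Sum>j'\<in>{..<b}-{j}. P {j,j'} - q2)) = (\<Sum>j<b. (\<Sum>j'\<in>{..<b}-{j}. P {j,j'})) - real b * (real b - 1) * q2"
      proof -
        have "(\<Sum>j<b. (\<Sum>j'\<in>{..<b}-{j}. q2)) = (\<Sum>j<b. (real b - 1) * q2)"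
          by (rule sum.cong[OF refl]) (use b in \<open>simp add: cardrm of_nat_diff\<close>)
        then show ?thesis by (simp add: sum_subtractf)
      qed
      ultimately show ?thesis unfolding E2eq Err_def
        by (simp add: sum.distrib sum_subtractf algebra_simps sum_distrib_left[symmetric] sum_distrib_right[symmetric])
    qed
    have nu0: "0 \<le> \<nu>" "\<nu> \<le> real b" unfolding \<nu>_def using q0 bp by (auto simp: mult_left_le)
    have Errb: "\<bar>Err\<bar> \<le> real b * (3 * real b * e2)"
    proof -
      have "\<bar>Err\<bar> \<le> (\<Sum>j<b. \<bar>(P {j} - q) * (1 - 2*\<nu>) + (\<Sum>j'\<in>{..<b}-{j}. P {j,j'} - q2)\<bar>)"
        unfolding Err_def by (rule sum_abs)
      also have "\<dots> \<le> (\<Sum>j<b. 3 * real b * e2)"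
      proof (rule sum_mono)
        fix j assume j: "j \<in> {..<b}"
        have a: "\<bar>(P {j} - q) * (1 - 2*\<nu>)\<bar> \<le> e2 * (1 + 2 * real b)"
          unfolding abs_mult using P1[of j] j nu0 e2pos by (intro mult_mono) auto
        have "\<bar>\<Sum>j'\<in>{..<b}-{j}. P {j,j'} - q2\<bar> \<le> (\<Sum>j'\<in>{..<b}-{j}. \<bar>P {j,j'} - q2\<bar>)" by (rule sum_abs)
        also have "\<dots> \<le> (\<Sum>j'\<in>{..<b}-{j}. e2)" by (rule sum_mono) (use P2 j in auto)
        also have "\<dots> = (real b - 1) * e2" using j b by (simp add: cardrm of_nat_diff)
        finally have c: "\<bar>\<Sum>j'\<in>{..<b}-{j}. P {j,j'} - q2\<bar> \<le> (real b - 1) * e2" .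
        have "\<bar>(P {j} - q) * (1 - 2*\<nu>) + (\<Sum>j'\<in>{..<b}-{j}. P {j,j'} - q2)\<bar> \<le> e2 * (1 + 2 * real b) + (real b - 1) * e2"
          using a c by linarith
        also have "\<dots> = 3 * real b * e2" by (simp add: algebra_simps)
        finally show "\<bar>(P {j} - q) * (1 - 2*\<nu>) + (\<Sum>j'\<in>{..<b}-{j}. P {j,j'} - q2)\<bar> \<le> 3 * real b * e2" .
      qed
      also have "\<dots> = real b * (3 * real b * e2)" by simp
      finally show ?thesis .
    qed
    have eb: "8 * (real b)^2 * (real (r choose m) * (2/real b)^m) \<le> 17/64 * (real r)^2 / real b"
      by (rule err_bound[OF m16 b b2m rb])
    have Errb2: "Err \<le> 17/64 * (real r)^2 / real b"
    proof -
      have "real b * (3 * real b * e2) = 6 * (real b)^2 * (real (r choose m) * (2/real b)^m)"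
        unfolding e2_def by (simp add: power2_eq_square)
      also have "\<dots> \<le> 8 * (real b)^2 * (real (r choose m) * (2/real b)^m)"
        by (intro mult_right_mono) auto
      finally show ?thesis using Errb eb by linarith
    qed
    have VuB: "real b * q * (1 - 2*\<nu>) + real b * (real b - 1) * q2 + \<nu>^2 \<le> (real r)^2 / real b"
    proof -
      have "real b * q * (1 - 2*\<nu>) + real b * (real b - 1) * q2 + \<nu>^2
          = real b * q + real b * (real b - 1) * q2 - (real b)^2 * q^2"
        unfolding \<nu>_def by (simp add: power2_eq_square algebra_simps)
      then show ?thesis using Vu[OF b, of r] unfolding q_def q2_def by simp
    qed
    have E2bound: "(\<Sum>\<omega>\<in>S. p \<omega> * (N \<omega> - \<nu>)^2) \<le> 81/64 * (real r)^2 / real b"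
      unfolding E2Vu using VuB Errb2 by (simp add: field_simps)
    have "measure_pmf.prob \<Omega> {\<omega>. \<bar>real (card (\<omega> ` {..<r})) - rho b r\<bar> > \<delta>}
        = (\<Sum>\<omega>\<in>S. p \<omega> * of_bool (\<bar>real (card (\<omega> ` {..<r})) - rho b r\<bar> > \<delta>))"
      using prob_sum[OF fin] unfolding S_def p_def by simp
    also have "\<dots> \<le> (\<Sum>\<omega>\<in>S. p \<omega> * ((N \<omega> - \<nu>)^2 / \<delta>^2))"
    proof (rule sum_mono)
      fix \<omega> assume w: "\<omega> \<in> S"
      have "of_bool (\<bar>\<nu> - N \<omega>\<bar> > \<delta>) \<le> (N \<omega> - \<nu>)^2 / \<delta>^2"
      proof (cases "\<bar>\<nu> - N \<omega>\<bar> > \<delta>")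
        case True
        then have "\<delta>^2 \<le> (N \<omega> - \<nu>)^2" using \<delta>pos
          by (metis abs_minus_commute abs_le_square_iff less_imp_le abs_of_pos)
        then show ?thesis using True \<delta>pos by simp
      qed simp
      then show "p \<omega> * of_bool (\<bar>real (card (\<omega> ` {..<r})) - rho b r\<bar> > \<delta>) \<le> p \<omega> * ((N \<omega> - \<nu>)^2 / \<delta>^2)"
        using card_eq[OF w] p0 by (intro mult_left_mono) auto
    qed
    also have "\<dots> = (\<Sum>\<omega>\<in>S. p \<omega> * (N \<omega> - \<nu>)^2) / \<delta>^2"
      by (simp add: sum_divide_distrib)
    also have "\<dots> \<le> (81/64 * (real r)^2 / real b) / \<delta>^2"
      using E2bound \<delta>pos by (intro divide_right_mono) auto
    also have "\<dots> = 2 powr (-6)" unfolding \<delta>2 using bp r1 by (simp add: powr_minus field_simps)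
    finally show ?thesis unfolding \<delta>_def .
  qed
qed


end
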